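(* Let $k\geq 0$ and \[F_k(x)=\sum_{l=0}^{k}B_{k-l}(x^{k+2})(x^{k+2}-1)^l\sum_{i=l}^{k}\binom{i}{l}x^{k+1-i}.\] For $0\le i\le k+1$ and $0\le j\le k+1$ let $f_k(i,j)$ denote the coefficient of $x^{(k+2)i+j}$ in $F_k(x)$. Then $f_k(i,0)=0$ for $0\leq i\leq k+1$, and $f_k(i,j+1)=t_k(i,j)$ for $0\leq i\leq k+1$ and $0\leq j\leq k$.
   Context: $B_n(y)=\sum_{\pi\in B_n}y^{\mathrm{des}_B(\pi)}$ is the type $B$ Eulerian polynomial: $B_n$ is the set of signed permutations $\pi_1\cdots\pi_n$ of $[n]$, and with $\pi_0=0$, $\mathrm{des}_B(\pi)$ counts $i\in\{0,\dots,n-1\}$ with $\pi_i>\pi_{i+1}$; $B_0=1$. Define \[\widetilde T_k(x)=\sum_{l=0}^{k}B_{k-l}(x^{k+1})(x^{k+1}-1)^l\sum_{i=l}^{k}\binom{i}{l}x^{k-i},\] and for $0\le i\le k+1$, $0\le j\le k$ let $t_k(i,j)$ be the coefficient of $x^{(k+1)i+j}$ in $\widetilde T_k(x)$. *)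

theory Defs
  imports "HOL-Computational_Algebra.Polynomial"
begin

definition signed_perms :: "nat \<Rightarrow> int list set" where
  "signed_perms n = {xs. length xs = n \<and> distinct (map abs xs) \<and> set (map abs xs) = {1..int n}}"

definition desB :: "int list \<Rightarrow> nat" where
  "desB xs = card {i. i < length xs \<and> (0 # xs) ! i > (0 # xs) ! (Suc i)}"

definition eulerB :: "nat \<Rightarrow> int poly" where
  "eulerB n = (\<Sum>xs\<in>signed_perms n. monom 1 (desB xs))"

definition Ttilde :: "nat \<Rightarrow> int poly" where
  "Ttilde k = (\<Sum>l=0..k. pcompose (eulerB (k - l)) (monom 1 (k+1))
      * (monom 1 (k+1) - 1) ^ l
      * (\<Sum>i=l..k. of_nat (i choose l) * monom 1 (k - i)))"

definition tk :: "nat \<Rightarrow> nat \<Rightarrow> nat \<Rightarrow> int" where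
  "tk k i j = coeff (Ttilde k) ((k+1)*i + j)"

definition Fk :: "nat \<Rightarrow> int poly" where
  "Fk k = (\<Sum>l=0..k. pcompose (eulerB (k - l)) (monom 1 (k+2))
      * (monom 1 (k+2) - 1) ^ l
      * (\<Sum>i=l..k. of_nat (i choose l) * monom 1 (k + 1 - i)))"

definition fk :: "nat \<Rightarrow> nat \<Rightarrow> nat \<Rightarrow> int" where
  "fk k i j = coeff (Fk k) ((k+2)*i + j)"

end

theory Submission
  imports Defs
begin

lemma key:
  fixes P R :: "int poly"
  assumes "degree R < n" "j < n"
  shows "coeff (pcompose P (monom 1 n) * R) (n*i+j) = coeff P i * coeff R j"
  using assms
proof (induction P arbitrary: i)
  case 0
  then show ?case by simp
next
  case (pCons a P)
  have e: "pcompose (pCons a P) (monom 1 n) * R = smult a R + monom 1 n * (pcompose P (monom 1 n) * R)"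
    by (simp add: pcompose_pCons algebra_simps)
  show ?case
  proof (cases i)
    case 0
    then show ?thesis using pCons.prems by (simp add: e coeff_monom_mult)
  next
    case (Suc m)
    have z: "coeff R (n*i+j) = 0" using pCons.prems Suc by (intro coeff_eq_0) simp
    have "n*i+j = n + (n*m+j)" using Suc by simp
    then show ?thesis using z Suc pCons.IH[of m] pCons.prems
      by (simp add: e coeff_monom_mult)
  qed
qed

lemma pcomp_pow: "pcompose (p ^ l) q = (pcompose p q) ^ (l::nat)" for p q :: "int poly"
  by (induction l) (simp_all add: pcompose_mult pcompose_1)

lemma X1: "monom (1::int) n - 1 = pcompose [:-1,1:] (monom 1 n)"
proof -
  have "[:-1::int:] = - 1" by (simp add: one_pCons)
  then show ?thesis by (simp add: pcompose_pCons)
qed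

definition Q :: "nat \<Rightarrow> nat \<Rightarrow> int poly" where
  "Q k l = (\<Sum>i=l..k. of_nat (i choose l) * monom 1 (k - i))"

definition E :: "nat \<Rightarrow> nat \<Rightarrow> int poly" where
  "E k l = eulerB (k - l) * [:-1,1:] ^ l"

lemma degQ: "degree (Q k l) < k + 1"
proof -
  have "degree (Q k l) \<le> k"
  proof (rule degree_le, intro allI impI)
    fix m assume "k < m"
    then show "coeff (Q k l) m = 0"
      unfolding Q_def by (simp add: coeff_sum of_nat_poly coeff_monom) (intro sum.neutral, auto)
  qed
  then show ?thesis by simp
qed

lemma T_eq: "Ttilde k = (\<Sum>l=0..k. pcompose (E k l) (monom 1 (k+1)) * Q k l)"
  unfolding Ttilde_def E_def Q_def
  by (simp add: pcompose_mult pcomp_pow X1)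

lemma shiftQ: "(\<Sum>i=l..k. of_nat (i choose l) * monom (1::int) (k + 1 - i)) = monom 1 1 * Q k l"
  unfolding Q_def sum_distrib_left
proof (rule sum.cong[OF refl])
  fix i assume "i \<in> {l..k}"
  then have "k + 1 - i = 1 + (k - i)" by auto
  then show "of_nat (i choose l) * monom (1::int) (k + 1 - i) = monom 1 1 * (of_nat (i choose l) * monom 1 (k - i))"
    by (simp add: mult_monom algebra_simps)
qed

lemma F_eq: "Fk k = (\<Sum>l=0..k. pcompose (E k l) (monom 1 (k+2)) * (monom 1 1 * Q k l))"
  unfolding Fk_def E_def shiftQ
  by (simp add: pcompose_mult pcomp_pow X1)

lemma degxQ: "degree (monom 1 1 * Q k l) < k + 2"
proof -
  have "degree (monom (1::int) 1 * Q k l) \<le> degree (monom (1::int) 1) + degree (Q k l)"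
    by (rule degree_mult_le)
  then show ?thesis using degQ[of k l] by (simp add: degree_monom_eq)
qed

theorem lemma3p2:
  fixes k :: nat
  shows "(\<forall>i\<le>k+1. fk k i 0 = 0) \<and> (\<forall>i\<le>k+1. \<forall>j\<le>k. fk k i (j+1) = tk k i j)"
proof (intro conjI allI impI)
  fix i :: nat
  show "fk k i 0 = 0"
    unfolding fk_def F_eq coeff_sum
    using key[OF degxQ, of 0 k] by (simp add: coeff_monom_mult)
next
  fix i j :: nat assume "j \<le> k"
  have "fk k i (j+1) = (\<Sum>l=0..k. coeff (E k l) i * coeff (Q k l) j)"
    unfolding fk_def F_eq coeff_sum
    using key[OF degxQ, of "j+1" k] \<open>j \<le> k\<close> by (simp add: coeff_monom_mult)
  moreover have "tk k i j = (\<Sum>l=0..k. coeff (E k l) i * coeff (Q k l) j)"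
    unfolding tk_def T_eq coeff_sum
    using key[OF degQ, of j k] \<open>j \<le> k\<close> by simp
  ultimately show "fk k i (j+1) = tk k i j" by simp
qed

end
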